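(* For every $n\ge2$, $$E\Big[U^{(n)}\big(U^{(n)}-E[\tau^{(n)}\mid\mathcal{Y}_n]\big)\Big]=\frac{2n}{n-1}\Big(H_{n,1}+H_{n,2}-1-\frac{H_{n,1}^2}{n}\Big).$$
   Context: Fix $n\ge 2$. A Yule tree with speciation rate 1 on $n$ tips: start with a single lineage; each lineage independently splits into two at rate 1; the process is stopped just before the $n$-th speciation event, so the tree has $n$ tips and $n-1$ speciation (internal) nodes, numbered $1,\dots,n-1$ chronologically from the root. For $i=1,\dots,n$ let $T_i$ be the length of the time interval during which there are exactly $i$ lineages; the $T_i$ are independent, $T_i\sim\mathrm{Exp}(i)$ (rate $i$), the $k$-th speciation occurs at time $T_1+\dots+T_k$, and at each speciation the splitting lineage is uniformly chosen among current lineages, independently of the $T_i$. The tree height is $U^{(n)}=T_1+\dots+T_n$. Choose an unordered pair of distinct tips uniformly at random (independently of everything else given the tree) and let $\kappa_n\in\{1,\dots,n-1\}$ be the index of the speciation event at which their lineages split; the coalescent time of the pair is $\tau^{(n)}=T_{\kappa_n+1}+\dots+T_n$. $\mathcal{Y}_n$ is the σ-field generated by the tree (topology and all branch lengths, in particular $T_1,\dots,T_n$), so $E[\tau^{(n)}\mid\mathcal{Y}_n]$ is the average of the coalescent times over all $\binom n2$ pairs of tips. $H_{n,r}=\sum_{i=1}^n i^{-r}$. *)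

theory Defs
  imports "HOL-Probability.Probability"
begin

definition H :: "nat \<Rightarrow> nat \<Rightarrow> real" where
  "H n r = (\<Sum>i=1..n. 1 / real i ^ r)"

text \<open>Lineages present when there are k lineages
  are labelled 0,...,k-1. At the k-th speciation event (k = 1..n-1; there are
  k lineages) lineage c k (an element of {..<k}) splits into lineages c k and k.
  The n tips are the lineages 0,...,n-1. A topology is the choice function c.\<close>
definition yule_topologies :: "nat \<Rightarrow> (nat \<Rightarrow> nat) set" where
  "yule_topologies n = Pi\<^sub>E {1..n-1} (\<lambda>k. {..<k})"

text \<open>Going one level up (from k+1 lineages to k lineages): lineage k was
  created at event k from lineage c k; all other lineages keep their label.\<close>
definition lineage_down :: "(nat \<Rightarrow> nat) \<Rightarrow> nat \<Rightarrow> nat \<Rightarrow> nat" where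
  "lineage_down c k y = (if y = k then c k else y)"

text \<open>anc_steps c n x j: ancestor of tip x at the level with n - j lineages.\<close>
primrec anc_steps :: "(nat \<Rightarrow> nat) \<Rightarrow> nat \<Rightarrow> nat \<Rightarrow> nat \<Rightarrow> nat" where
  "anc_steps c n x 0 = x"
| "anc_steps c n x (Suc j) = lineage_down c (n - Suc j) (anc_steps c n x j)"

definition ancestor :: "(nat \<Rightarrow> nat) \<Rightarrow> nat \<Rightarrow> nat \<Rightarrow> nat \<Rightarrow> nat" where
  "ancestor c n k x = anc_steps c n x (n - k)"

text \<open>Index kappa of the speciation event at which the lineages of tips a and b
  split: the last level k (k lineages, k in 1..n-1) at which they share an ancestor.\<close>
definition split_event :: "(nat \<Rightarrow> nat) \<Rightarrow> nat \<Rightarrow> nat \<Rightarrow> nat \<Rightarrow> nat" where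
  "split_event c n a b = Max {k \<in> {1..n-1}. ancestor c n k a = ancestor c n k b}"

definition coal_time :: "nat \<Rightarrow> (nat \<Rightarrow> nat) \<Rightarrow> (nat \<Rightarrow> real) \<Rightarrow> nat \<Rightarrow> nat \<Rightarrow> real" where
  "coal_time n c T a b = (\<Sum>i\<in>{split_event c n a b + 1..n}. T i)"

text \<open>E[tau | Y_n]: average coalescent time over all unordered pairs of tips.\<close>
definition mean_coal_time :: "nat \<Rightarrow> (nat \<Rightarrow> nat) \<Rightarrow> (nat \<Rightarrow> real) \<Rightarrow> real" where
  "mean_coal_time n c T =
     (\<Sum>b<n. \<Sum>a<b. coal_time n c T a b) / real (n choose 2)"

definition yule_height :: "nat \<Rightarrow> (nat \<Rightarrow> real) \<Rightarrow> real" where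
  "yule_height n T = (\<Sum>i=1..n. T i)"

definition yule_times :: "nat \<Rightarrow> (nat \<Rightarrow> real) measure" where
  "yule_times n = (\<Pi>\<^sub>M i\<in>{1..n}. density lborel (exponential_density (real i)))"

definition yule_space :: "nat \<Rightarrow> ((nat \<Rightarrow> nat) \<times> (nat \<Rightarrow> real)) measure" where
  "yule_space n = uniform_count_measure (yule_topologies n) \<Otimes>\<^sub>M yule_times n"

end

theory Submission
  imports Defs
begin

lemma anc_steps_Suc_n: "anc_steps c (Suc n) x (Suc j) = anc_steps c n (lineage_down c n x) j"
  by (induction j) auto

lemma anc_steps_upd: "0 < n \<Longrightarrow> n \<le> m \<Longrightarrow> anc_steps (c(m:=v)) n x j = anc_steps c n x j"
  by (induction j) (auto simp: lineage_down_def)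

lemma ancestor_Suc: "k \<le> n \<Longrightarrow> ancestor c (Suc n) k x = ancestor c n k (lineage_down c n x)"
proof -
  assume "k \<le> n"
  then have "Suc n - k = Suc (n-k)" by simp
  then show ?thesis unfolding ancestor_def by (simp only: anc_steps_Suc_n)
qed

lemma ancestor_upd: "0 < n \<Longrightarrow> n \<le> m \<Longrightarrow> ancestor (c(m:=v)) n k x = ancestor c n k x"
  unfolding ancestor_def by (simp add: anc_steps_upd)

lemma ancestor_self: "ancestor c n n x = x"
  unfolding ancestor_def by simp

lemma ancestor_down: "1 \<le> k \<Longrightarrow> k \<le> n \<Longrightarrow> ancestor c n (k-1) x = lineage_down c (k-1) (ancestor c n k x)"
proof -
  assume a: "1 \<le> k" "k \<le> n"
  have "n - (k-1) = Suc (n-k)" using a by simp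
  moreover have "n - Suc (n-k) = k - 1" using a by simp
  ultimately show ?thesis unfolding ancestor_def by simp
qed

lemma ancestor_lt:
  assumes c: "c \<in> yule_topologies n" and x: "x < n" and k: "1 \<le> k" "k \<le> n"
  shows "ancestor c n k x < k"
  using k(2)
proof (induction k rule: inc_induct)
  case base then show ?case using x by (simp add: ancestor_self)
next
  case (step m)
  have m1: "1 \<le> m" using k step.hyps by simp
  have "ancestor c n m x = lineage_down c m (ancestor c n (Suc m) x)"
    using ancestor_down[of "Suc m" n c x] step.hyps by simp
  moreover have "c m < m" using c m1 step.hyps unfolding yule_topologies_def by auto
  ultimately show ?case using step.IH by (auto simp: lineage_down_def)
qed

lemma ancestor_eq_mono:
  assumes e: "ancestor c n k a = ancestor c n k b" and k: "k \<le> n" and k': "1 \<le> k'" "k' \<le> k"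
  shows "ancestor c n k' a = ancestor c n k' b"
  using k'(2)
proof (induction k' rule: inc_induct)
  case base then show ?case using e .
next
  case (step m)
  have "1 \<le> Suc m" by simp
  then show ?case using ancestor_down[of "Suc m" n c] step k by simp
qed

lemma split_event_lt:
  assumes c: "c \<in> yule_topologies n" and ab: "a < n" "b < n" "a \<noteq> b" and j: "1 \<le> j" "j \<le> n"
  shows "split_event c n a b < j \<longleftrightarrow> ancestor c n j a \<noteq> ancestor c n j b"
proof -
  define S where "S = {k \<in> {1..n-1}. ancestor c n k a = ancestor c n k b}"
  have fin: "finite S" unfolding S_def by simp
  have n2: "n \<ge> 2" using ab by simp
  have "ancestor c n 1 a = 0" "ancestor c n 1 b = 0"
    using ancestor_lt[OF c, of a 1] ancestor_lt[OF c, of b 1] ab n2 by auto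
  then have "1 \<in> S" unfolding S_def using n2 by auto
  then have ne: "S \<noteq> {}" by auto
  have se: "split_event c n a b = Max S" unfolding split_event_def S_def by simp
  show ?thesis
  proof
    assume "split_event c n a b < j"
    then have lt: "Max S < j" using se by simp
    show "ancestor c n j a \<noteq> ancestor c n j b"
    proof
      assume eq: "ancestor c n j a = ancestor c n j b"
      have "j \<noteq> n" using eq ab by (auto simp: ancestor_self)
      then have "j \<in> S" unfolding S_def using eq j by auto
      then have "j \<le> Max S" using fin by simp
      then show False using lt by simp
    qed
  next
    assume neq: "ancestor c n j a \<noteq> ancestor c n j b"
    show "split_event c n a b < j"
    proof (rule ccontr)
      assume "\<not> split_event c n a b < j"
      then have "j \<le> Max S" using se by simp
      moreover have "Max S \<in> S" using fin ne by simp
      ultimately have "ancestor c n j a = ancestor c n j b"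
        using ancestor_eq_mono[of c n "Max S" a b j] j unfolding S_def by auto
      then show False using neq by simp
    qed
  qed
qed


definition Qs :: "nat \<Rightarrow> nat \<Rightarrow> (nat \<Rightarrow> nat) \<Rightarrow> real" where
  "Qs n k c = (\<Sum>a<n. \<Sum>b<n. if ancestor c n k a = ancestor c n k b then 1 else 0)"

lemma finite_top: "finite (yule_topologies n)"
  unfolding yule_topologies_def by (simp add: finite_PiE)

lemma card_top: "card (yule_topologies n) = fact (n - 1)"
proof -
  have "card (yule_topologies n) = (\<Prod>i\<in>{1..n-1}. card {..<i})"
    unfolding yule_topologies_def by (simp add: card_PiE)
  also have "\<dots> = \<Prod>{1..n-1}" by simp
  finally show ?thesis by (simp add: fact_prod)
qed

lemma sum_top_Suc:
  assumes "1 \<le> n"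
  shows "sum f (yule_topologies (Suc n)) = (\<Sum>c\<in>yule_topologies n. \<Sum>l<n. f (c(n:=l)))"
proof -
  have I: "{1..n} = insert n {1..n-1}" using assms by auto
  have "yule_topologies (Suc n) = (\<lambda>(y, g). g(n := y)) ` ({..<n} \<times> yule_topologies n)"
  proof -
    have "yule_topologies (Suc n) = Pi\<^sub>E (insert n {1..n-1}) (\<lambda>k. {..<k})"
      unfolding yule_topologies_def using I by simp
    then show ?thesis unfolding yule_topologies_def by (simp only: PiE_insert_eq)
  qed
  moreover have "inj_on (\<lambda>(y, g). g(n := y)) ({..<n} \<times> yule_topologies n)"
    unfolding yule_topologies_def using assms by (intro inj_combinator) auto
  ultimately have "sum f (yule_topologies (Suc n)) = (\<Sum>p\<in>{..<n} \<times> yule_topologies n. f ((snd p)(n := fst p)))"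
    using sum.reindex[of "\<lambda>(y, g). g(n := y)" "{..<n} \<times> yule_topologies n" f]
    by (simp add: case_prod_beta o_def)
  also have "\<dots> = (\<Sum>l<n. \<Sum>c\<in>yule_topologies n. f (c(n:=l)))"
    by (simp add: sum.cartesian_product case_prod_beta)
  also have "\<dots> = (\<Sum>c\<in>yule_topologies n. \<Sum>l<n. f (c(n:=l)))"
    by (rule sum.swap)
  finally show ?thesis .
qed

lemma Qs_step:
  assumes k: "1 \<le> k" "k \<le> n"
  shows "Qs (Suc n) k (c(n:=l)) = Qs n k c
     + 2 * (\<Sum>a<n. if ancestor c n k a = ancestor c n k l then 1 else 0) + 1"
proof -
  define g where "g = ancestor c n k"
  have A: "ancestor (c(n:=l)) (Suc n) k a = g (if a = n then l else a)" for a
    using k by (simp add: ancestor_Suc ancestor_upd g_def lineage_down_def)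
  have "Qs (Suc n) k (c(n:=l)) = (\<Sum>a<Suc n. \<Sum>b<Suc n. if g (if a = n then l else a) = g (if b = n then l else b) then 1 else 0)"
    unfolding Qs_def A by simp
  also have "\<dots> = (\<Sum>a<n. \<Sum>b<n. if g a = g b then 1 else 0)
     + (\<Sum>a<n. if g a = g l then 1 else 0) + (\<Sum>b<n. if g l = g b then 1 else 0) + 1"
    by (simp add: sum.distrib)
  also have "(\<Sum>b<n. if g l = g b then 1 else 0) = (\<Sum>a<n. if g a = g l then 1 else (0::real))"
    by (simp add: eq_commute)
  finally show ?thesis unfolding Qs_def g_def by simp
qed

lemma Qs_sum:
  assumes k: "1 \<le> k" "k \<le> n"
  shows "(\<Sum>c\<in>yule_topologies n. Qs n k c) = fact (n-1) * real n * (2 * real n + 1 - real k) / (real k + 1)"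
  using k(2)
proof (induction n rule: dec_induct)
  case base
  have "Qs k k c = real k" for c
    unfolding Qs_def ancestor_self by simp
  then show ?case using k by (simp add: card_top field_simps)
next
  case (step m)
  have m1: "1 \<le> m" using step k by simp
  have inner: "(\<Sum>l<m. Qs (Suc m) k (c(m:=l))) = (real m + 2) * Qs m k c + real m" for c
  proof -
    have "(\<Sum>l<m. Qs (Suc m) k (c(m:=l))) = (\<Sum>l<m. Qs m k c
       + 2 * (\<Sum>a<m. if ancestor c m k a = ancestor c m k l then 1 else 0) + 1)"
      by (intro sum.cong refl Qs_step) (use k step in auto)
    also have "\<dots> = real m * Qs m k c + 2 * (\<Sum>l<m. \<Sum>a<m. if ancestor c m k a = ancestor c m k l then 1 else 0) + real m"
      by (simp add: sum.distrib sum_distrib_left)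
    also have "(\<Sum>l<m. \<Sum>a<m. if ancestor c m k a = ancestor c m k l then 1 else 0) = Qs m k c"
      unfolding Qs_def by (rule sum.swap)
    also have "real m * Qs m k c + 2 * Qs m k c + real m = (real m + 2) * Qs m k c + real m"
      by (simp add: algebra_simps)
    finally show ?thesis .
  qed
  have "(\<Sum>c\<in>yule_topologies (Suc m). Qs (Suc m) k c) = (\<Sum>c\<in>yule_topologies m. (real m + 2) * Qs m k c + real m)"
    by (simp only: sum_top_Suc[OF m1] inner)
  also have "\<dots> = (real m + 2) * (\<Sum>c\<in>yule_topologies m. Qs m k c) + real m * fact (m-1)"
    by (simp add: sum.distrib sum_distrib_left card_top)
  also have "\<dots> = (real m + 2) * (fact (m-1) * real m * (2 * real m + 1 - real k) / (real k + 1)) + real m * fact (m-1)"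
    using step.IH by simp
  also have "\<dots> = fact (Suc m - 1) * real (Suc m) * (2 * real (Suc m) + 1 - real k) / (real k + 1)"
  proof -
    have f: "fact (Suc m - 1) = real m * fact (m - 1)"
      using m1 by (metis Suc_diff_1 diff_Suc_1 fact_Suc le_eq_less_or_eq less_one not_less of_nat_fact of_nat_mult order_less_le_trans zero_less_one)
    show ?thesis unfolding f by (simp add: field_simps)
  qed
  finally show ?case .
qed


lemma hb: "(n::real) \<noteq> 0 \<Longrightarrow> D \<noteq> 0 \<Longrightarrow> m \<noteq> 0 \<Longrightarrow> F*n*P/(2*D)/(n*m/2) = F*P/(D*m)"
  by (simp add: field_simps)

lemma hterm: "(x::real) \<noteq> 0 \<Longrightarrow> y \<noteq> 0 \<Longrightarrow> m \<noteq> 0 \<Longrightarrow>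
   2*(n-x)/(y*m)*(h/x + 1/x^2) = 2/m*(h*((n-x)/(x*y)) + (n-x)/(x^2*y))"
  by (simp add: field_simps power2_eq_square)

definition Pf :: "nat \<Rightarrow> nat \<Rightarrow> (nat \<Rightarrow> nat) \<Rightarrow> real" where
  "Pf n j c = (\<Sum>b<n. \<Sum>a<b. if split_event c n a b < j then 1 else 0) / real (n choose 2)"

lemma sym_sum:
  fixes f :: "nat \<Rightarrow> nat \<Rightarrow> real"
  assumes "\<And>a b. f a b = f b a" "\<And>a. f a a = 0"
  shows "(\<Sum>a<n. \<Sum>b<n. f a b) = 2 * (\<Sum>b<n. \<Sum>a<b. f a b)"
proof (induction n)
  case 0 then show ?case by simp
next
  case (Suc n)
  have "(\<Sum>a<Suc n. \<Sum>b<Suc n. f a b) = (\<Sum>a<n. \<Sum>b<n. f a b) + (\<Sum>a<n. f a n) + (\<Sum>b<n. f n b)"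
    using assms(2) by (simp add: sum.distrib)
  also have "(\<Sum>b<n. f n b) = (\<Sum>a<n. f a n)" using assms(1) by simp
  finally show ?case using Suc by (simp add: algebra_simps)
qed

lemma real_choose_two: "real (n choose 2) = real n * (real n - 1) / 2"
proof (induction n)
  case 0 then show ?case by simp
next
  case (Suc n)
  have "Suc n choose 2 = n + (n choose 2)"
    by (simp add: numeral_2_eq_2)
  then show ?case using Suc by (simp add: field_simps)
qed

lemma pairs_count:
  assumes c: "c \<in> yule_topologies n" and j: "1 \<le> j" "j \<le> n"
  shows "(\<Sum>b<n. \<Sum>a<b. if split_event c n a b < j then 1 else 0) = (real n ^ 2 - Qs n j c) / 2"
proof -
  define f where "f a b = (if ancestor c n j a \<noteq> ancestor c n j b then 1 else (0::real))" for a b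
  have "(\<Sum>b<n. \<Sum>a<b. if split_event c n a b < j then 1 else 0) = (\<Sum>b<n. \<Sum>a<b. f a b)"
    unfolding f_def by (intro sum.cong refl) (use split_event_lt[OF c _ _ _ j] in auto)
  also have "\<dots> = (\<Sum>a<n. \<Sum>b<n. f a b) / 2"
  proof -
    have fs: "\<And>a b. f a b = f b a" by (auto simp: f_def)
    have f0: "\<And>a. f a a = 0" by (auto simp: f_def)
    show ?thesis using sym_sum[of f n, OF fs f0] by simp
  qed
  also have "(\<Sum>a<n. \<Sum>b<n. f a b) = (\<Sum>a<n. \<Sum>b<n. 1 - (if ancestor c n j a = ancestor c n j b then 1 else 0))"
    unfolding f_def by (intro sum.cong refl) auto
  also have "\<dots> = real n ^ 2 - Qs n j c"
    unfolding Qs_def by (simp add: sum_subtractf power2_eq_square)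
  finally show ?thesis .
qed

lemma Ec:
  assumes n: "n \<ge> 2" and j: "1 \<le> j" "j \<le> n"
  shows "(\<Sum>c\<in>yule_topologies n. 1 - Pf n j c) / fact (n-1)
       = 2 * (real n - real j) / ((real j + 1) * (real n - 1))"
proof -
  define F where "F = (fact (n-1) :: real)"
  have F0: "F > 0" unfolding F_def by simp
  have "(\<Sum>c\<in>yule_topologies n. 1 - Pf n j c)
      = F - (\<Sum>c\<in>yule_topologies n. (real n ^ 2 - Qs n j c) / 2) / real (n choose 2)"
    unfolding Pf_def F_def
    by (simp add: sum_subtractf card_top sum_divide_distrib[symmetric] pairs_count[OF _ j])
  also have "(\<Sum>c\<in>yule_topologies n. (real n ^ 2 - Qs n j c) / 2)
     = (F * real n ^ 2 - F * real n * (2 * real n + 1 - real j) / (real j + 1)) / 2"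
    by (simp add: sum_divide_distrib[symmetric] sum_subtractf card_top Qs_sum[OF j] F_def)
  finally have e: "(\<Sum>c\<in>yule_topologies n. 1 - Pf n j c) =
     F - ((F * real n ^ 2 - F * real n * (2 * real n + 1 - real j) / (real j + 1)) / 2) / (real n * (real n - 1) / 2)"
    by (simp add: real_choose_two)
  have n1: "real n - 1 > 0" "real n > 0" using n by auto
  have d: "(real j + 1) * (real n - 1) > 0" using n1 by simp
  have "F - ((F * real n ^ 2 - F * real n * (2 * real n + 1 - real j) / (real j + 1)) / 2) / (real n * (real n - 1) / 2)
     = F * (2 * (real n - real j) / ((real j + 1) * (real n - 1)))"
  proof -
    have a: "(F * real n ^ 2 - F * real n * (2 * real n + 1 - real j) / (real j + 1)) / 2
        = F * real n * ((real n + 1) * (real j - 1)) / (2 * (real j + 1))"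
      by (simp add: field_simps power2_eq_square)
    have b: "F * real n * ((real n + 1) * (real j - 1)) / (2 * (real j + 1)) / (real n * (real n - 1) / 2)
        = F * ((real n + 1) * (real j - 1)) / ((real j + 1) * (real n - 1))"
      using n1 hb[of "real n" "real j + 1" "real n - 1" F "(real n + 1) * (real j - 1)"] by simp
    have c: "F - F * ((real n + 1) * (real j - 1)) / ((real j + 1) * (real n - 1))
        = F * (2 * (real n - real j) / ((real j + 1) * (real n - 1)))"
      using d by (simp add: field_simps)
    show ?thesis unfolding a b c ..
  qed
  then show ?thesis unfolding e F_def[symmetric] using F0 by simp
qed

lemma t1: "(y::real) > 0 \<Longrightarrow> z = y + 1 \<Longrightarrow> 1/y + 1/(y^2*z) = 1/y^2 + 1/z"
proof -
  assume a: "y > 0" "z = y + 1"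
  then have "z > 0" by simp
  then have "1/y + 1/(y^2*z) - (1/y^2 + 1/z) = (y*z + 1 - z - y^2)/(y^2*z)"
    using a(1) by (simp add: field_simps power2_eq_square)
  also have "y*z + 1 - z - y^2 = 0" using a by (simp add: algebra_simps power2_eq_square)
  finally show ?thesis by simp
qed
lemma t0: "(y::real) > 0 \<Longrightarrow> z = y + 1 \<Longrightarrow> (y-1)/y + 1/(y*z) = y/z"
proof -
  assume a: "y > 0" "z = y + 1"
  then have "z > 0" by simp
  then have "(y-1)/y + 1/(y*z) - y/z = ((y-1)*z + 1 - y*y)/(y*z)"
    using a(1) by (simp add: field_simps power2_eq_square)
  also have "(y-1)*z + 1 - y*y = 0" using a by (simp add: algebra_simps power2_eq_square)
  finally show ?thesis by simp
qed

lemma hfin: "m \<noteq> 0 \<Longrightarrow> (N::real) \<noteq> 0 \<Longrightarrow> 2/m*(h*(N - h) + (N*k - N)) = 2*N/m*(h + k - 1 - h^2/N)"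
  by (simp add: field_simps power2_eq_square)

lemma H_Suc: "H (Suc n) r = H n r + 1 / real (Suc n) ^ r"
  unfolding H_def by simp

lemma L0: "(\<Sum>j=1..n. 1 / (real j * (real j + 1))) = real n / (real n + 1)"
proof (induction n)
  case 0 then show ?case by simp
next
  case (Suc n)
  have "(\<Sum>j=1..Suc n. 1 / (real j * (real j + 1))) = real n / (real n + 1) + 1 / ((real n + 1) * (real n + 2))"
    using Suc by (simp add: add.commute)
  also have "\<dots> = real (Suc n) / (real (Suc n) + 1)"
    using t0[of "real n + 1" "real n + 2"] by (simp add: add.commute)
  finally show ?case .
qed

lemma L1: "(\<Sum>j=1..n. (real n - real j) / (real j * (real j + 1))) = real n - H n 1"
proof (induction n)
  case 0 then show ?case by (simp add: H_def)
next
  case (Suc n)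
  have "(\<Sum>j=1..Suc n. (real (Suc n) - real j) / (real j * (real j + 1)))
      = (\<Sum>j=1..n. (real (Suc n) - real j) / (real j * (real j + 1)))" by simp
  also have "\<dots> = (\<Sum>j=1..n. (real n - real j) / (real j * (real j + 1)) + 1 / (real j * (real j + 1)))"
    by (intro sum.cong refl) (simp add: diff_divide_distrib add_divide_distrib algebra_simps)
  also have "\<dots> = real n - H n 1 + real n / (real n + 1)"
    using Suc L0[of n] by (simp add: sum.distrib)
  finally show ?case by (simp add: H_Suc field_simps)
qed

lemma L3: "(\<Sum>j=1..n. 1 / (real j ^ 2 * (real j + 1))) = H n 2 - 1 + 1 / (real n + 1)"
proof (induction n)
  case 0 then show ?case by (simp add: H_def)
next
  case (Suc n)
  have "(\<Sum>j=1..Suc n. 1 / (real j ^ 2 * (real j + 1))) = H n 2 - 1 + 1 / (real n + 1) + 1 / ((real n + 1)^2 * (real n + 2))"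
    using Suc by (simp add: add.commute)
  also have "\<dots> = H (Suc n) 2 - 1 + 1 / (real (Suc n) + 1)"
    using t1[of "real n + 1" "real n + 2"] by (simp add: H_Suc add.commute)
  finally show ?case .
qed

lemma L2: "(\<Sum>j=1..n. (real n - real j) / (real j ^ 2 * (real j + 1))) = real n * H n 2 - real n"
proof (induction n)
  case 0 then show ?case by (simp add: H_def)
next
  case (Suc n)
  have "(\<Sum>j=1..Suc n. (real (Suc n) - real j) / (real j ^ 2 * (real j + 1)))
      = (\<Sum>j=1..n. (real (Suc n) - real j) / (real j ^ 2 * (real j + 1)))" by simp
  also have "\<dots> = (\<Sum>j=1..n. (real n - real j) / (real j ^ 2 * (real j + 1)) + 1 / (real j ^ 2 * (real j + 1)))"
    by (intro sum.cong refl) (simp add: diff_divide_distrib add_divide_distrib algebra_simps)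
  also have "\<dots> = real n * H n 2 - real n + (H n 2 - 1 + 1 / (real n + 1))"
    using Suc L3[of n] by (simp add: sum.distrib)
  also have "\<dots> = real (Suc n) * H (Suc n) 2 - real (Suc n)"
  proof -
    have e: "real (Suc n) * (1 / real (Suc n) ^ 2) = 1 / (real n + 1)" by (simp add: power2_eq_square)
    have f: "real (Suc n) * H n 2 = real n * H n 2 + H n 2" by (simp add: algebra_simps)
    show ?thesis unfolding H_Suc distrib_left using e f by simp
  qed
  finally show ?case .
qed

lemma final_sum:
  assumes n: "n \<ge> 2"
  shows "(\<Sum>j=1..n. 2 * (real n - real j) / ((real j + 1) * (real n - 1)) * (H n 1 / real j + 1 / real j ^ 2))
     = 2 * real n / (real n - 1) * (H n 1 + H n 2 - 1 - (H n 1)^2 / real n)"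
proof -
  have "(\<Sum>j=1..n. 2 * (real n - real j) / ((real j + 1) * (real n - 1)) * (H n 1 / real j + 1 / real j ^ 2))
     = (\<Sum>j=1..n. 2 / (real n - 1) * (H n 1 * ((real n - real j) / (real j * (real j + 1)))
            + (real n - real j) / (real j ^ 2 * (real j + 1))))"
    using n by (intro sum.cong refl hterm) auto
  also have "\<dots> = 2 / (real n - 1) * (H n 1 * (real n - H n 1) + (real n * H n 2 - real n))"
    by (simp only: sum.distrib sum_distrib_left[symmetric] L1 L2)
  also have "\<dots> = 2 * real n / (real n - 1) * (H n 1 + H n 2 - 1 - (H n 1)^2 / real n)"
    using n hfin[of "real n - 1" "real n" "H n 1" "H n 2"] by simp
  finally show ?thesis .
qed


lemma sum_div_gen: "(\<Sum>j\<in>A. T j * S j) / (C::real) = (\<Sum>j\<in>A. T j * (S j / C))"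
  by (simp add: sum_divide_distrib)

lemma coal_time_eq: "coal_time n c T a b = (\<Sum>j=1..n. T j * (if split_event c n a b < j then 1 else 0))"
proof -
  have "{split_event c n a b + 1..n} = {j\<in>{1..n}. split_event c n a b < j}" by auto
  then have "coal_time n c T a b = (\<Sum>j\<in>{1..n}. if split_event c n a b < j then T j else 0)"
    unfolding coal_time_def by (simp only: sum.inter_filter[OF finite_atLeastAtMost])
  then show ?thesis by (auto intro!: sum.cong)
qed

lemma mean_eq: "mean_coal_time n c T = (\<Sum>j=1..n. T j * Pf n j c)"
proof -
  have "(\<Sum>b<n. \<Sum>a<b. coal_time n c T a b)
      = (\<Sum>b<n. \<Sum>a<b. \<Sum>j=1..n. T j * (if split_event c n a b < j then 1 else 0))"
    unfolding coal_time_eq ..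
  also have "\<dots> = (\<Sum>b<n. \<Sum>j=1..n. \<Sum>a<b. T j * (if split_event c n a b < j then 1 else 0))"
    by (intro sum.cong refl sum.swap)
  also have "\<dots> = (\<Sum>j=1..n. \<Sum>b<n. \<Sum>a<b. T j * (if split_event c n a b < j then 1 else 0))"
    by (rule sum.swap)
  also have "\<dots> = (\<Sum>j=1..n. T j * (\<Sum>b<n. \<Sum>a<b. (if split_event c n a b < j then 1 else 0)))"
    by (simp add: sum_distrib_left)
  finally have X: "(\<Sum>b<n. \<Sum>a<b. coal_time n c T a b) = (\<Sum>j=1..n. T j * (\<Sum>b<n. \<Sum>a<b. (if split_event c n a b < j then 1 else 0)))" .
  show ?thesis
    unfolding mean_coal_time_def Pf_def X by (rule sum_div_gen)
qed

lemma integrand_eq: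
  "yule_height n T * (yule_height n T - mean_coal_time n c T)
   = (\<Sum>i=1..n. \<Sum>j=1..n. (1 - Pf n j c) * (T i * T j))"
proof -
  have a: "yule_height n T * yule_height n T = (\<Sum>i=1..n. \<Sum>j=1..n. T i * T j)"
    unfolding yule_height_def by (rule sum_product)
  have b: "yule_height n T * mean_coal_time n c T = (\<Sum>i=1..n. \<Sum>j=1..n. T i * (T j * Pf n j c))"
    unfolding yule_height_def mean_eq by (rule sum_product)
  have "(\<Sum>i=1..n. \<Sum>j=1..n. (1 - Pf n j c) * (T i * T j))
     = (\<Sum>i=1..n. \<Sum>j=1..n. T i * T j - T i * (T j * Pf n j c))"
    by (intro sum.cong refl) (simp add: algebra_simps)
  also have "\<dots> = (\<Sum>i=1..n. \<Sum>j=1..n. T i * T j) - (\<Sum>i=1..n. \<Sum>j=1..n. T i * (T j * Pf n j c))"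
    by (simp add: sum_subtractf)
  finally show ?thesis using a b by (simp add: right_diff_distrib)
qed

lemma exp_moment:
  assumes l: "0 < l"
  shows "has_bochner_integral (density lborel (exponential_density l)) (\<lambda>x. x ^ m) (fact m / l ^ m)"
proof -
  let ?M = "density lborel (exponential_density l)"
  interpret prob_space ?M by (rule prob_space_exponential_density[OF l])
  have D: "distributed ?M lborel (\<lambda>x. x) (exponential_density l)"
    unfolding distributed_def
    by (auto simp: distr_id2 measurable_ident_sets)
  show ?thesis using has_bochner_integral_erlang_ith_moment[OF l D, of m] by simp
qed

lemma pair_prod:
  fixes f :: "'a \<Rightarrow> real" and g :: "'b \<Rightarrow> real"
  assumes s1: "sigma_finite_measure M1" and s2: "sigma_finite_measure M2"
    and f: "integrable M1 f" and g: "integrable M2 g"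
  shows "integrable (M1 \<Otimes>\<^sub>M M2) (\<lambda>x. f (fst x) * g (snd x))"
    and "(\<integral>x. f (fst x) * g (snd x) \<partial>(M1 \<Otimes>\<^sub>M M2)) = integral\<^sup>L M1 f * integral\<^sup>L M2 g"
proof -
  interpret pair_sigma_finite M1 M2 using s1 s2 by (simp add: pair_sigma_finite_def)
  have fm[measurable]: "f \<in> borel_measurable M1" using f by simp
  have gm[measurable]: "g \<in> borel_measurable M2" using g by simp
  show i: "integrable (M1 \<Otimes>\<^sub>M M2) (\<lambda>x. f (fst x) * g (snd x))"
  proof (rule Fubini_integrable)
    show "(\<lambda>x. f (fst x) * g (snd x)) \<in> borel_measurable (M1 \<Otimes>\<^sub>M M2)" by measurable
    have "integrable M1 (\<lambda>x. \<bar>f x\<bar> * (\<integral>y. \<bar>g y\<bar> \<partial>M2))" using f by simp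
    then show "integrable M1 (\<lambda>x. \<integral>y. norm (f (fst (x, y)) * g (snd (x, y))) \<partial>M2)"
      by (simp add: abs_mult)
    show "AE x in M1. integrable M2 (\<lambda>y. f (fst (x, y)) * g (snd (x, y)))" using g by simp
  qed
  show "(\<integral>x. f (fst x) * g (snd x) \<partial>(M1 \<Otimes>\<^sub>M M2)) = integral\<^sup>L M1 f * integral\<^sup>L M2 g"
    using integral_fst'[OF i, symmetric] by simp
qed


lemma pow01: "(x::real) ^ (if P then 1 else 0) = (if P then x else 1)" by simp

lemma sf_exp: "sigma_finite_measure (density lborel (exponential_density (real i)))"
proof (cases "i = 0")
  case True
  have "finite_measure (density lborel (exponential_density (real i)))"
  proof (rule finite_measureI)
    have "\<And>x. exponential_density (real i) x = 0" using True by (simp add: exponential_density_def)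
    then show "emeasure (density lborel (exponential_density (real i))) (space (density lborel (exponential_density (real i)))) \<noteq> \<infinity>"
      by (simp add: emeasure_density)
  qed
  then show ?thesis by (simp add: finite_measure_def)
next
  case False
  then show ?thesis by (intro prob_space_imp_sigma_finite prob_space_exponential_density) simp
qed

lemma ET:
  assumes i: "i \<in> {1..n}" and j: "j \<in> {1..n}"
  shows "integrable (yule_times n) (\<lambda>T. T i * T j)"
    and "(\<integral>T. T i * T j \<partial>yule_times n) = (if i = j then 2 / real i ^ 2 else 1 / (real i * real j))"
proof -
  define MM where "MM = (\<lambda>k::nat. density lborel (exponential_density (real k)))"
  interpret product_sigma_finite MM
    unfolding product_sigma_finite_def MM_def using sf_exp by simp
  define ex where "ex k = (if k = i then 1 else 0) + (if k = j then 1 else (0::nat))" for k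
  have int: "\<And>k. k \<in> {1..n} \<Longrightarrow> has_bochner_integral (MM k) (\<lambda>x. x ^ ex k) (fact (ex k) / real k ^ ex k)"
    unfolding MM_def by (rule exp_moment) simp
  have eq: "(\<Prod>k\<in>{1..n}. T k ^ ex k) = T i * T j" for T :: "nat \<Rightarrow> real"
    unfolding ex_def power_add prod.distrib pow01 using i j by (simp add: prod.delta)
  have yt: "yule_times n = Pi\<^sub>M {1..n} MM" unfolding yule_times_def MM_def ..
  have I1: "integrable (Pi\<^sub>M {1..n} MM) (\<lambda>T. \<Prod>k\<in>{1..n}. T k ^ ex k)"
    by (rule product_integrable_prod) (use int in \<open>auto simp: has_bochner_integral_iff\<close>)
  then show "integrable (yule_times n) (\<lambda>T. T i * T j)" unfolding yt eq .
  have "(\<integral>T. T i * T j \<partial>yule_times n) = (\<integral>T. (\<Prod>k\<in>{1..n}. T k ^ ex k) \<partial>Pi\<^sub>M {1..n} MM)"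
    unfolding yt eq ..
  also have "\<dots> = (\<Prod>k\<in>{1..n}. fact (ex k) / real k ^ ex k)"
    by (subst product_integral_prod) (use int in \<open>auto simp: has_bochner_integral_iff intro!: prod.cong\<close>)
  also have "\<dots> = (if i = j then 2 / real i ^ 2 else 1 / (real i * real j))"
  proof (cases "i = j")
    case True
    then have "(\<Prod>k\<in>{1..n}. fact (ex k) / real k ^ ex k) = (\<Prod>k\<in>{1..n}. if k = i then 2 / real k ^ 2 else 1)"
      by (intro prod.cong refl) (auto simp: ex_def power2_eq_square)
    then show ?thesis using True i by (simp add: prod.delta)
  next
    case False
    then have "(\<Prod>k\<in>{1..n}. fact (ex k) / real k ^ ex k) = (\<Prod>k\<in>{1..n}. (if k = i then 1 / real k else 1) * (if k = j then 1 / real k else 1))"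
      by (intro prod.cong refl) (auto simp: ex_def)
    then show ?thesis using False i j by (simp add: prod.distrib prod.delta)
  qed
  finally show "(\<integral>T. T i * T j \<partial>yule_times n) = (if i = j then 2 / real i ^ 2 else 1 / (real i * real j))" .
qed

lemma sf_yt: "sigma_finite_measure (yule_times n)"
proof -
  define MM where "MM = (\<lambda>k::nat. density lborel (exponential_density (real k)))"
  interpret finite_product_sigma_finite MM "{1..n}"
    unfolding finite_product_sigma_finite_def product_sigma_finite_def finite_product_sigma_finite_axioms_def
      MM_def using sf_exp by simp
  show ?thesis unfolding yule_times_def MM_def[symmetric] by (rule sigma_finite_measure_axioms)
qed

theorem lemmaY4p4:
  fixes n :: nat
  assumes "n \<ge> 2"
  shows "(\<integral>\<omega>. (case \<omega> of (c, T) \<Rightarrow>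
            yule_height n T * (yule_height n T - mean_coal_time n c T)) \<partial>yule_space n)
         = 2 * real n / (real n - 1) * (H n 1 + H n 2 - 1 - (H n 1)^2 / real n)"
proof -
  let ?A = "yule_topologies n"
  let ?M1 = "uniform_count_measure ?A"
  have ne: "?A \<noteq> {}" using card_top[of n] by (metis card.empty fact_nonzero)
  have s1: "sigma_finite_measure ?M1"
    by (intro prob_space_imp_sigma_finite prob_space_uniform_count_measure finite_top ne)
  have s2: "sigma_finite_measure (yule_times n)" by (rule sf_yt)
  have iM1: "integrable ?M1 f" for f :: "_ \<Rightarrow> real"
    unfolding uniform_count_measure_def by (rule integrable_point_measure_finite[OF finite_top])
  define w where "w j = 2 * (real n - real j) / ((real j + 1) * (real n - 1))" for j
  define tm where "tm i j \<omega> = (1 - Pf n j (fst \<omega>)) * (snd \<omega> i * snd \<omega> j)" for i j and \<omega> :: "(nat \<Rightarrow> nat) \<times> (nat \<Rightarrow> real)"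
  have tI: "integrable (yule_space n) (tm i j)" and tV: "integral\<^sup>L (yule_space n) (tm i j) = w j * (if i = j then 2 / real i ^ 2 else 1 / (real i * real j))"
    if ij: "i \<in> {1..n}" "j \<in> {1..n}" for i j
  proof -
    have c1: "integral\<^sup>L ?M1 (\<lambda>c. 1 - Pf n j c) = w j"
      unfolding integral_uniform_count_measure[OF finite_top] card_top w_def
      using Ec[OF assms, of j] ij by simp
    show "integrable (yule_space n) (tm i j)"
      unfolding yule_space_def tm_def
      by (rule pair_prod(1)[OF s1 s2 iM1 ET(1)[OF ij]])
    show "integral\<^sup>L (yule_space n) (tm i j) = w j * (if i = j then 2 / real i ^ 2 else 1 / (real i * real j))"
      unfolding yule_space_def tm_def
      using pair_prod(2)[OF s1 s2 iM1 ET(1)[OF ij], of "\<lambda>c. 1 - Pf n j c"] c1 ET(2)[OF ij] by simp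
  qed
  have "(\<integral>\<omega>. (case \<omega> of (c, T) \<Rightarrow>
            yule_height n T * (yule_height n T - mean_coal_time n c T)) \<partial>yule_space n)
      = (\<integral>\<omega>. (\<Sum>i=1..n. \<Sum>j=1..n. tm i j \<omega>) \<partial>yule_space n)"
    by (intro Bochner_Integration.integral_cong refl) (auto simp: integrand_eq tm_def split: prod.splits)
  also have "\<dots> = (\<Sum>i=1..n. \<Sum>j=1..n. integral\<^sup>L (yule_space n) (tm i j))"
  proof -
    have "(\<integral>\<omega>. (\<Sum>i=1..n. \<Sum>j=1..n. tm i j \<omega>) \<partial>yule_space n) = (\<Sum>i=1..n. \<integral>\<omega>. (\<Sum>j=1..n. tm i j \<omega>) \<partial>yule_space n)"
      by (rule Bochner_Integration.integral_sum) (use tI in \<open>auto intro!: Bochner_Integration.integrable_sum\<close>)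
    also have "\<dots> = (\<Sum>i=1..n. \<Sum>j=1..n. integral\<^sup>L (yule_space n) (tm i j))"
      by (intro sum.cong refl Bochner_Integration.integral_sum) (use tI in auto)
    finally show ?thesis .
  qed
  also have "\<dots> = (\<Sum>i=1..n. \<Sum>j=1..n. w j * (1 / (real i * real j) + (if i = j then 1 / real j ^ 2 else 0)))"
  proof -
    have sq: "\<And>x::real. 1 / (x * x) = 1 / x ^ 2" by (simp add: power2_eq_square)
    show ?thesis by (intro sum.cong refl) (auto simp: tV sq)
  qed
  also have "\<dots> = (\<Sum>j=1..n. \<Sum>i=1..n. w j * (1 / (real i * real j) + (if i = j then 1 / real j ^ 2 else 0)))"
    by (rule sum.swap)
  also have "\<dots> = (\<Sum>j=1..n. w j * (H n 1 / real j + 1 / real j ^ 2))"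
  proof (intro sum.cong refl)
    fix j assume j: "j \<in> {1..n}"
    have "(\<Sum>i=1..n. 1 / (real i * real j)) = H n 1 / real j"
      unfolding H_def by (simp add: sum_divide_distrib)
    then show "(\<Sum>i=1..n. w j * (1 / (real i * real j) + (if i = j then 1 / real j ^ 2 else 0))) = w j * (H n 1 / real j + 1 / real j ^ 2)"
      using j by (simp add: sum_distrib_left[symmetric] sum.distrib)
  qed
  also have "\<dots> = 2 * real n / (real n - 1) * (H n 1 + H n 2 - 1 - (H n 1)^2 / real n)"
    unfolding w_def by (rule final_sum[OF assms])
  finally show ?thesis .
qed

end
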